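(* There exist universal constants $c,c'>0$ such that for all integers $d\ge1$ and $k$ with $d$ dividing $k-1$, the Octopus graph $G_{k,d}$ satisfies $c/d^2\le\lambda_2\le c'/d^2$, where $\lambda_2$ is the second-smallest eigenvalue of its Laplacian; i.e. $\lambda_2=\Theta(1/d^2)$.
   Context: Octopus graph $G_{k,d}$: for nodes $i<j$ in $\{1,\dots,k\}$, $\{i,j\}$ is an edge iff either ($j=k$ and $i\equiv1\pmod d$) or ($j\ne k$, $j=i+1$ and $i\not\equiv0\pmod d$). Thus node $k$ is a centre from which $(k-1)/d$ paths of $d$ nodes each emanate. The Laplacian has diagonal entries equal to degrees and $-1$ for adjacent pairs, $0$ otherwise. *)

theory Defs
  imports "Jordan_Normal_Form.Char_Poly" "HOL-Computational_Algebra.Polynomial_Factorial"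
begin

text \<open>Adjacency in the Octopus graph G_{k,d} on nodes 1..k (1-based, as in the paper):
  for i < j, {i,j} is an edge iff (j = k and i mod d = 1 mod d) or (j \<noteq> k, j = i+1 and i mod d \<noteq> 0).\<close>
definition octo_edge_lt :: "nat \<Rightarrow> nat \<Rightarrow> nat \<Rightarrow> nat \<Rightarrow> bool" where
  "octo_edge_lt k d i j \<longleftrightarrow> 1 \<le> i \<and> i < j \<and> j \<le> k \<and>
     ((j = k \<and> i mod d = 1 mod d) \<or> (j \<noteq> k \<and> j = i + 1 \<and> i mod d \<noteq> 0))"

definition octo_adj :: "nat \<Rightarrow> nat \<Rightarrow> nat \<Rightarrow> nat \<Rightarrow> bool" where
  "octo_adj k d i j \<longleftrightarrow> octo_edge_lt k d i j \<or> octo_edge_lt k d j i"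

definition octo_degree :: "nat \<Rightarrow> nat \<Rightarrow> nat \<Rightarrow> nat" where
  "octo_degree k d i = card {j \<in> {1..k}. octo_adj k d i j}"

text \<open>Laplacian as a k x k real matrix; matrix index i (0-based) corresponds to node i+1.\<close>
definition octo_laplacian :: "nat \<Rightarrow> nat \<Rightarrow> real mat" where
  "octo_laplacian k d = mat k k (\<lambda>(i, j).
     if i = j then real (octo_degree k d (i + 1))
     else if octo_adj k d (i + 1) (j + 1) then -1 else 0)"

definition sorted_eigenvalues :: "real mat \<Rightarrow> real list" where
  "sorted_eigenvalues A = sorted_list_of_multiset (proots (char_poly A))"

definition lambda2 :: "real mat \<Rightarrow> real" where
  "lambda2 A = sorted_eigenvalues A ! 1"

end

theory Submission
  imports Defs "Jordan_Normal_Form.Schur_Decomposition"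
begin

lemma real_sym_eigen:
  fixes A :: "real mat"
  assumes A: "A \<in> carrier_mat n n" and n: "n > 0" and sym: "\<And>i j. i < n \<Longrightarrow> j < n \<Longrightarrow> A $$ (i,j) = A $$ (j,i)"
  shows "\<exists>e v. v \<in> carrier_vec n \<and> v \<noteq> 0\<^sub>v n \<and> A *\<^sub>v v = e \<cdot>\<^sub>v v"
proof -
  let ?Ac = "map_mat complex_of_real A"
  have Ac: "?Ac \<in> carrier_mat n n" using A by auto
  obtain as where cp: "char_poly ?Ac = (\<Prod>a\<leftarrow>as. [:-a,1:])" and len: "length as = n"
    using char_poly_factorized[OF Ac] by auto
  obtain lam rest where as: "as = lam # rest" using len n by (cases as) auto
  have "poly (char_poly ?Ac) lam = 0" unfolding cp as by simp
  then have "eigenvalue ?Ac lam" using eigenvalue_root_char_poly[OF Ac] by simp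
  then obtain z where z: "eigenvector ?Ac z lam" by (auto simp: eigenvalue_def)
  hence zc: "z \<in> carrier_vec n" "z \<noteq> 0\<^sub>v n" "?Ac *\<^sub>v z = lam \<cdot>\<^sub>v z" using Ac by (auto simp: eigenvector_def)
  have dz: "dim_vec z = n" using zc by auto
  have comp: "(\<Sum>j=0..<n. complex_of_real (A$$(i,j)) * z$j) = lam * z$i" if i: "i < n" for i
  proof -
    have "(?Ac *\<^sub>v z) $ i = lam * z $ i" using zc(3) i dz by simp
    moreover have "(?Ac *\<^sub>v z) $ i = (\<Sum>j=0..<n. complex_of_real (A$$(i,j)) * z$j)"
      using i A dz by (simp add: scalar_prod_def row_def)
    ultimately show ?thesis by simp
  qed
  define S where "S = (\<Sum>i=0..<n. \<Sum>j=0..<n. cnj (z$i) * complex_of_real (A$$(i,j)) * z$j)"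
  define N where "N = (\<Sum>i=0..<n. cnj (z$i) * z$i)"
  have S1: "S = lam * N"
  proof -
    have "S = (\<Sum>i=0..<n. cnj (z$i) * (\<Sum>j=0..<n. complex_of_real (A$$(i,j)) * z$j))"
      unfolding S_def by (simp add: sum_distrib_left mult.assoc)
    also have "\<dots> = (\<Sum>i=0..<n. cnj (z$i) * (lam * z$i))" using comp by simp
    finally show ?thesis unfolding N_def by (simp add: sum_distrib_left mult_ac)
  qed
  have S2: "cnj S = S"
  proof -
    have "cnj S = (\<Sum>i=0..<n. \<Sum>j=0..<n. z$i * complex_of_real (A$$(i,j)) * cnj (z$j))"
      unfolding S_def by simp
    also have "\<dots> = (\<Sum>j=0..<n. \<Sum>i=0..<n. z$i * complex_of_real (A$$(i,j)) * cnj (z$j))"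
      by (rule sum.swap)
    also have "\<dots> = S" unfolding S_def
      by (intro sum.cong refl, simp add: sym mult_ac)
    finally show ?thesis .
  qed
  obtain i0 where i0: "i0 < n" "z $ i0 \<noteq> 0" using zc(1,2) by (metis dz eq_vecI index_zero_vec(1) index_zero_vec(2))
  define R where "R = (\<Sum>i=0..<n. (norm (z$i))^2)"
  have NR: "N = complex_of_real R"
  proof -
    have "complex_of_real R = (\<Sum>i=0..<n. complex_of_real ((norm (z$i))^2))" unfolding R_def of_real_sum ..
    also have "\<dots> = N" unfolding N_def complex_norm_square by (simp add: mult.commute)
    finally show ?thesis by simp
  qed
  have "R \<ge> (norm (z$i0))^2" unfolding R_def
    by (rule member_le_sum) (use i0 in auto)
  hence Rpos: "R > 0" using i0 by (smt (verit) zero_less_norm_iff zero_less_power)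
  have "cnj lam * N = lam * N" using S1 S2 NR by (metis complex_cnj_complex_of_real complex_cnj_mult)
  hence "cnj lam = lam" using NR Rpos by simp
  hence lamr: "lam = complex_of_real (Re lam)" by (metis Reals_cnj_iff Re_complex_of_real Reals_cases)
  have "char_poly ?Ac = map_poly complex_of_real (char_poly A)"
    by (rule of_real_hom.char_poly_hom[OF A])
  hence "poly (char_poly A) (Re lam) = 0" using \<open>poly (char_poly ?Ac) lam = 0\<close> lamr
    by (metis of_real_eq_0_iff of_real_hom.poly_map_poly)
  hence "eigenvalue A (Re lam)" using eigenvalue_root_char_poly[OF A] by simp
  then obtain v where "eigenvector A v (Re lam)" by (auto simp: eigenvalue_def)
  thus ?thesis using A unfolding eigenvector_def by auto
qed

lemma real_conj_vec[simp]: "conjugate (w :: real vec) = w"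
  by (rule eq_vecI) auto

lemma real_sprod_self_pos:
  fixes w :: "real vec"
  assumes "w \<in> carrier_vec n" "w \<noteq> 0\<^sub>v n"
  shows "w \<bullet> w > 0"
proof -
  obtain i where i: "i < n" "w $ i \<noteq> 0" using assms by (metis eq_vecI carrier_vecD index_zero_vec(1) index_zero_vec(2))
  have "w \<bullet> w = (\<Sum>j=0..<n. (w$j)^2)" using assms by (simp add: scalar_prod_def power2_eq_square)
  also have "\<dots> \<ge> (w$i)^2" by (rule member_le_sum) (use i in auto)
  finally show ?thesis using i by (smt (verit) zero_less_power2)
qed

lemma real_spectral_step:
  fixes A :: "real mat"
  assumes A: "A \<in> carrier_mat (Suc m) (Suc m)" and sym: "\<And>i j. i < Suc m \<Longrightarrow> j < Suc m \<Longrightarrow> A $$ (i,j) = A $$ (j,i)"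
  shows "\<exists>U e. U \<in> carrier_mat (Suc m) (Suc m) \<and> U\<^sup>T * U = 1\<^sub>m (Suc m) \<and>
     (\<forall>i < Suc m. (U\<^sup>T * A * U) $$ (i, 0) = (if i = 0 then e else 0))"
proof -
  define n where "n = Suc m"
  have A: "A \<in> carrier_mat n n" using A n_def by simp
  obtain e v where v: "v \<in> carrier_vec n" "v \<noteq> 0\<^sub>v n" "A *\<^sub>v v = e \<cdot>\<^sub>v v"
    using real_sym_eigen[OF A] sym n_def by auto
  have vv: "v \<bullet> v > 0" using real_sprod_self_pos v by blast
  define v1 where "v1 = (1 / sqrt (v \<bullet> v)) \<cdot>\<^sub>v v"
  have v1c: "v1 \<in> carrier_vec n" using v unfolding v1_def by simp
  have v1v1: "v1 \<bullet> v1 = 1" unfolding v1_def using v vv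
    by (simp add: field_simps)
  have v10: "v1 \<noteq> 0\<^sub>v n" using v1v1 v1c by auto
  have Av1: "A *\<^sub>v v1 = e \<cdot>\<^sub>v v1"
  proof -
    have "A *\<^sub>v v1 = (1 / sqrt (v \<bullet> v)) \<cdot>\<^sub>v (A *\<^sub>v v)" unfolding v1_def using v A by (simp add: mult_mat_vec)
    also have "\<dots> = (1 / sqrt (v \<bullet> v)) \<cdot>\<^sub>v (e \<cdot>\<^sub>v v)" using v by simp
    also have "\<dots> = e \<cdot>\<^sub>v v1" unfolding v1_def smult_smult_assoc by (simp add: mult.commute)
    finally show ?thesis .
  qed
  interpret cof_vec_space n "TYPE(real)" .
  define b where "b = basis_completion v1"
  from basis_completion[OF v1c v10, folded b_def]
  have dist_b: "distinct b" and indep: "\<not> lin_dep (set b)" and bc: "set b \<subseteq> carrier_vec n" and hdb: "hd b = v1"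
    and len_b: "length b = n" by auto
  from hdb len_b n_def obtain vs where bv: "b = v1 # vs" by (cases b, auto)
  define ws where "ws = gram_schmidt n b"
  from gram_schmidt_result[OF bc dist_b indep refl, folded ws_def]
  have wsc: "set ws \<subseteq> carrier_vec n" and orth: "corthogonal ws" and len_ws: "length ws = n" 
    by (auto simp: len_b)
  from gram_schmidt_hd[OF v1c, of vs, folded bv] have hdws: "hd ws = v1" unfolding ws_def .
  have ww: "ws ! i \<bullet> ws ! j = 0 \<longleftrightarrow> i \<noteq> j" if "i < n" "j < n" for i j
    using corthogonalD[OF orth, of i j] that len_ws by simp
  have wpos: "ws ! i \<bullet> ws ! i > 0" if "i < n" for i
  proof -
    have c: "ws ! i \<in> carrier_vec n" using wsc that len_ws by auto
    have "ws ! i \<noteq> 0\<^sub>v n" using ww[OF that that] c by auto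
    thus ?thesis using real_sprod_self_pos c by blast
  qed
  define us where "us = map (\<lambda>w. (1 / sqrt (w \<bullet> w)) \<cdot>\<^sub>v w) ws"
  have len_us: "length us = n" unfolding us_def using len_ws by simp
  have usc: "us ! i \<in> carrier_vec n" if "i < n" for i
    unfolding us_def using that len_ws wsc by auto
  have usus: "us ! i \<bullet> us ! j = (if i = j then 1 else 0)" if i: "i < n" and j: "j < n" for i j
  proof -
    have ci: "ws ! i \<in> carrier_vec n" and cj: "ws ! j \<in> carrier_vec n" using wsc i j len_ws by auto
    have "us ! i \<bullet> us ! j = (1 / sqrt (ws!i \<bullet> ws!i)) * (1 / sqrt (ws!j \<bullet> ws!j)) * (ws ! i \<bullet> ws ! j)"
      unfolding us_def using i j len_ws ci cj by simp
    show ?thesis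
    proof (cases "i = j")
      case True
      have "(1 / sqrt (ws!i \<bullet> ws!i)) * (1 / sqrt (ws!i \<bullet> ws!i)) * (ws ! i \<bullet> ws ! i) = 1"
        using wpos[OF i] by (simp add: field_simps)
      then show ?thesis using \<open>us ! i \<bullet> us ! j = _\<close> True by simp
    next
      case False
      then show ?thesis using \<open>us ! i \<bullet> us ! j = _\<close> ww[OF i j] by simp
    qed
  qed
  have hdus: "us ! 0 = v1" using hdws v1v1 len_ws n_def unfolding us_def by (cases ws) auto
  define U where "U = mat_of_cols n us"
  have U: "U \<in> carrier_mat n n" unfolding U_def using len_us mat_of_cols_carrier(1)[of n us] by simp
  have colU: "col U i = us ! i" if "i < n" for i
    unfolding U_def using that len_us usc by simp
  have UU: "U\<^sup>T * U = 1\<^sub>m n"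
  proof (rule eq_matI)
    fix i j assume i: "i < dim_row (1\<^sub>m n :: real mat)" and j: "j < dim_col (1\<^sub>m n :: real mat)"
    have "(U\<^sup>T * U) $$ (i, j) = col U i \<bullet> col U j" using i j U by simp
    also have "\<dots> = (1\<^sub>m n) $$ (i,j)" using i j colU usus by simp
    finally show "(U\<^sup>T * U) $$ (i, j) = (1\<^sub>m n) $$ (i,j)" .
  qed (use U in auto)
  have entry: "(U\<^sup>T * A * U) $$ (i, j) = col U i \<bullet> (A *\<^sub>v col U j)" if "i < n" "j < n" for i j
  proof -
    have "U\<^sup>T * A * U = U\<^sup>T * (A * U)" using U A by (simp add: assoc_mult_mat[of _ n n _ n _ n])
    thus ?thesis using that U A by (simp add: mult_mat_vec_def)
  qed
  have "\<forall>i < n. (U\<^sup>T * A * U) $$ (i, 0) = (if i = 0 then e else 0)"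
  proof (intro allI impI)
    fix i assume i: "i < n"
    have "(U\<^sup>T * A * U) $$ (i, 0) = col U i \<bullet> (e \<cdot>\<^sub>v us ! 0)"
      using entry[OF i] n_def colU hdus Av1 by simp
    also have "\<dots> = e * (us ! i \<bullet> us ! 0)" using colU[OF i] i usc[of 0] usc[OF i] n_def by (simp add: scalar_prod_smult_distrib[of _ n])
    finally show "(U\<^sup>T * A * U) $$ (i, 0) = (if i = 0 then e else 0)" using usus[OF i] n_def by simp
  qed
  thus ?thesis using U UU n_def by blast
qed

lemma sum_Suc_split: "(\<Sum>l=0..<Suc m. f l) = f 0 + (\<Sum>l=0..<m. f (Suc l))"
  by (simp only: sum.atLeast0_lessThan_Suc_shift comp_def)

lemma real_spectral:
  fixes A :: "real mat"
  assumes "A \<in> carrier_mat n n" and "\<And>i j. i < n \<Longrightarrow> j < n \<Longrightarrow> A $$ (i,j) = A $$ (j,i)"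
  shows "\<exists>V es. V \<in> carrier_mat n n \<and> length es = n \<and> V\<^sup>T * V = 1\<^sub>m n \<and>
     A * V = V * mat_diag n (\<lambda>i. es ! i)"
  using assms
proof (induction n arbitrary: A)
  case 0
  show ?case by (rule exI[of _ "1\<^sub>m 0"], rule exI[of _ "[]"]) (use 0 in \<open>auto intro!: eq_matI simp: mat_diag_def\<close>)
next
  case (Suc m)
  note A = Suc.prems(1) and sym = Suc.prems(2)
  obtain U e where U: "U \<in> carrier_mat (Suc m) (Suc m)" and UU: "U\<^sup>T * U = 1\<^sub>m (Suc m)"
    and col0: "\<forall>i < Suc m. (U\<^sup>T * A * U) $$ (i, 0) = (if i = 0 then e else 0)"
    using real_spectral_step[OF A sym] by blast
  define A' where "A' = U\<^sup>T * A * U"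
  have A': "A' \<in> carrier_mat (Suc m) (Suc m)" unfolding A'_def using U A by auto
  have A'T: "A'\<^sup>T = A'"
  proof -
    have "A\<^sup>T = A" using A sym by (intro eq_matI) auto
    thus ?thesis unfolding A'_def using U A
      by (simp add: transpose_mult[of _ "Suc m" "Suc m" _ "Suc m"] assoc_mult_mat[of _ "Suc m" "Suc m" _ "Suc m" _ "Suc m"])
  qed
  have symA': "A' $$ (i,j) = A' $$ (j,i)" if "i < Suc m" "j < Suc m" for i j
    using arg_cong[OF A'T, of "\<lambda>M. M $$ (j,i)"] that A' by simp
  have c0: "A' $$ (i, 0) = (if i = 0 then e else 0)" if "i < Suc m" for i using col0 that A'_def by simp
  have r0: "A' $$ (0, j) = (if j = 0 then e else 0)" if "j < Suc m" for j using c0[OF that] symA'[OF _ that] by simp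
  define A3 where "A3 = mat m m (\<lambda>(i,j). A' $$ (Suc i, Suc j))"
  have A3: "A3 \<in> carrier_mat m m" unfolding A3_def by simp
  have symA3: "A3 $$ (i,j) = A3 $$ (j,i)" if "i < m" "j < m" for i j
    unfolding A3_def using that symA' by simp
  obtain V3 es3 where V3: "V3 \<in> carrier_mat m m" and les3: "length es3 = m" and VV3: "V3\<^sup>T * V3 = 1\<^sub>m m"
    and AV3: "A3 * V3 = V3 * mat_diag m (\<lambda>i. es3 ! i)"
    using Suc.IH[OF A3 symA3] by blast
  define Vb where "Vb = mat (Suc m) (Suc m) (\<lambda>(i,j). if i = 0 \<and> j = 0 then 1 else if i = 0 \<or> j = 0 then 0 else V3 $$ (i - 1, j - 1))"
  define es where "es = e # es3"
  define D where "D = mat_diag (Suc m) (\<lambda>i. es ! i)"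
  have Vb: "Vb \<in> carrier_mat (Suc m) (Suc m)" unfolding Vb_def by simp
  have D: "D \<in> carrier_mat (Suc m) (Suc m)" unfolding D_def by simp
  have AV3e: "(\<Sum>l=0..<m. A' $$ (Suc i, Suc l) * V3 $$ (l, j)) = V3 $$ (i, j) * es3 ! j" if "i < m" "j < m" for i j
  proof -
    have "(A3 * V3) $$ (i,j) = (\<Sum>l=0..<m. A' $$ (Suc i, Suc l) * V3 $$ (l, j))"
      using that A3 V3 by (simp add: scalar_prod_def A3_def)
    moreover have "(V3 * mat_diag m (\<lambda>i. es3 ! i)) $$ (i,j) = V3 $$ (i, j) * es3 ! j"
      using that V3 by (simp add: mat_diag_mult_right[OF V3])
    ultimately show ?thesis using AV3 by simp
  qed
  have VV3e: "(\<Sum>l=0..<m. V3 $$ (l, i) * V3 $$ (l, j)) = (if i = j then 1 else 0)" if "i < m" "j < m" for i j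
  proof -
    have "(V3\<^sup>T * V3) $$ (i,j) = (\<Sum>l=0..<m. V3 $$ (l, i) * V3 $$ (l, j))"
      using that V3 by (simp add: scalar_prod_def)
    thus ?thesis using VV3 that by simp
  qed
  have AVb: "A' * Vb = Vb * D"
  proof (rule eq_matI)
    fix i j assume i: "i < dim_row (Vb * D)" and j: "j < dim_col (Vb * D)"
    hence i: "i < Suc m" and j: "j < Suc m" using Vb D by auto
    have L: "(A' * Vb) $$ (i,j) = (\<Sum>l=0..<Suc m. A' $$ (i,l) * Vb $$ (l,j))"
      using i j A' Vb by (simp add: scalar_prod_def)
    have R: "(Vb * D) $$ (i,j) = Vb $$ (i,j) * es ! j"
      unfolding D_def using i j Vb by (simp add: mat_diag_mult_right[OF Vb])
    show "(A' * Vb) $$ (i,j) = (Vb * D) $$ (i,j)"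
    proof (cases j)
      case 0
      then show ?thesis unfolding L R sum_Suc_split using i c0[OF i] by (simp add: Vb_def es_def)
    next
      case (Suc j')
      show ?thesis
      proof (cases i)
        case 0
        then show ?thesis unfolding L R sum_Suc_split using r0 Suc j by (simp add: Vb_def es_def)
      next
        case (Suc i')
        then show ?thesis unfolding L R sum_Suc_split using AV3e[of i' j'] \<open>j = Suc j'\<close> i j c0
          by (simp add: Vb_def es_def symA')
      qed
    qed
  qed (use A' Vb D in auto)
  have VbVb: "Vb\<^sup>T * Vb = 1\<^sub>m (Suc m)"
  proof (rule eq_matI)
    fix i j assume i: "i < dim_row (1\<^sub>m (Suc m) :: real mat)" and j: "j < dim_col (1\<^sub>m (Suc m) :: real mat)"
    hence i: "i < Suc m" and j: "j < Suc m" by auto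
    have L: "(Vb\<^sup>T * Vb) $$ (i,j) = (\<Sum>l=0..<Suc m. Vb $$ (l,i) * Vb $$ (l,j))"
      using i j Vb by (simp add: scalar_prod_def)
    show "(Vb\<^sup>T * Vb) $$ (i,j) = (1\<^sub>m (Suc m)) $$ (i,j)"
      unfolding L sum_Suc_split
    proof (cases i; cases j)
      fix i' j' assume "i = Suc i'" "j = Suc j'"
      then show "Vb $$ (0, i) * Vb $$ (0, j) + (\<Sum>l = 0..<m. Vb $$ (Suc l, i) * Vb $$ (Suc l, j)) = 1\<^sub>m (Suc m) $$ (i, j)"
        using VV3e[of i' j'] i j by (simp add: Vb_def)
    qed (use i j in \<open>auto simp: Vb_def\<close>)
  qed (use Vb in auto)
  define V where "V = U * Vb"
  have V: "V \<in> carrier_mat (Suc m) (Suc m)" unfolding V_def using U Vb by auto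
  have UUT: "U * U\<^sup>T = 1\<^sub>m (Suc m)" using mat_mult_left_right_inverse[OF _ U UU] U by auto
  have AU: "A * U = U * A'"
  proof -
    have "U * A' = (U * U\<^sup>T) * A * U" unfolding A'_def using U A
      by (simp add: assoc_mult_mat[of _ "Suc m" "Suc m" _ "Suc m" _ "Suc m"])
    thus ?thesis using UUT A U by simp
  qed
  have "V\<^sup>T * V = 1\<^sub>m (Suc m)"
  proof -
    have "V\<^sup>T * V = Vb\<^sup>T * (U\<^sup>T * U) * Vb" unfolding V_def using U Vb
      by (simp add: transpose_mult[of _ "Suc m" "Suc m" _ "Suc m"] assoc_mult_mat[of _ "Suc m" "Suc m" _ "Suc m" _ "Suc m"])
    thus ?thesis using UU VbVb Vb by simp
  qed
  moreover have "A * V = V * D"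
  proof -
    have "A * V = (A * U) * Vb" unfolding V_def using U Vb A by simp
    also have "\<dots> = U * (A' * Vb)" unfolding AU using U Vb A' by simp
    also have "\<dots> = V * D" unfolding AVb V_def using U Vb D by simp
    finally show ?thesis .
  qed
  moreover have "length es = Suc m" using les3 es_def by simp
  ultimately show ?case using V unfolding D_def by blast
qed

lemma card_filter_sort: "card {i. i < length (sort xs) \<and> P (sort xs ! i)} = card {i. i < length xs \<and> P (xs ! i)}"
proof -
  have "card {i. i < length (sort xs) \<and> P (sort xs ! i)} = length (filter P (sort xs))" by (rule length_filter_conv_card[symmetric])
  also have "\<dots> = length (filter P xs)" by (metis filter_sort length_sort)
  also have "\<dots> = card {i. i < length xs \<and> P (xs ! i)}" by (rule length_filter_conv_card)
  finally show ?thesis .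
qed

lemma sort_idx1_le:
  fixes xs :: "real list"
  assumes "i < length xs" "j < length xs" "i \<noteq> j" "xs ! i \<le> t" "xs ! j \<le> t"
  shows "sort xs ! 1 \<le> t"
proof (rule ccontr)
  assume "\<not> sort xs ! 1 \<le> t"
  hence gt: "sort xs ! 1 > t" by simp
  let ?s = "sort xs"
  have len: "length ?s = length xs" by simp
  have "{l. l < length ?s \<and> ?s ! l \<le> t} \<subseteq> {0}"
  proof
    fix l assume l: "l \<in> {l. l < length ?s \<and> ?s ! l \<le> t}"
    show "l \<in> {0}"
    proof (rule ccontr)
      assume "l \<notin> {0}"
      hence "1 \<le> l" by simp
      hence "?s ! 1 \<le> ?s ! l" using l by (intro sorted_nth_mono) auto
      thus False using l gt by simp
    qed
  qed
  hence "card {l. l < length ?s \<and> ?s ! l \<le> t} \<le> card {0::nat}" by (intro card_mono) auto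
  hence "card {l. l < length ?s \<and> ?s ! l \<le> t} \<le> 1" by simp
  moreover have "{i, j} \<subseteq> {l. l < length xs \<and> xs ! l \<le> t}" using assms by auto
  hence "card {i, j} \<le> card {l. l < length xs \<and> xs ! l \<le> t}" by (intro card_mono) auto
  hence "2 \<le> card {l. l < length xs \<and> xs ! l \<le> t}" using assms by simp
  ultimately show False using card_filter_sort[of xs "\<lambda>x. x \<le> t"] by simp
qed

lemma sort_idx1_lt:
  fixes xs :: "real list"
  assumes "length xs \<ge> 2" "sort xs ! 1 < t"
  shows "\<exists>i j. i < length xs \<and> j < length xs \<and> i \<noteq> j \<and> xs ! i < t \<and> xs ! j < t"
proof -
  let ?s = "sort xs"
  have "?s ! 0 \<le> ?s ! 1" using assms by (intro sorted_nth_mono) auto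
  hence "{0, 1} \<subseteq> {l. l < length ?s \<and> ?s ! l < t}" using assms by auto
  hence "card {0::nat, 1} \<le> card {l. l < length ?s \<and> ?s ! l < t}" by (intro card_mono) auto
  hence "2 \<le> card {l. l < length xs \<and> xs ! l < t}" using card_filter_sort[of xs "\<lambda>x. x < t"] by simp
  moreover have fin: "finite {l. l < length xs \<and> xs ! l < t}" by simp
  ultimately have "{l. l < length xs \<and> xs ! l < t} \<noteq> {}" by (intro notI) simp
  then obtain i where i: "i \<in> {l. l < length xs \<and> xs ! l < t}" by blast
  have "card ({l. l < length xs \<and> xs ! l < t} - {i}) \<ge> 1"
    using i fin \<open>2 \<le> card _\<close> by (simp add: card_Diff_singleton)
  hence "{l. l < length xs \<and> xs ! l < t} - {i} \<noteq> {}" by (intro notI) simp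
  then obtain j where "j \<in> {l. l < length xs \<and> xs ! l < t} - {i}" by blast
  hence "i \<in> {l. l < length xs \<and> xs ! l < t}" "j \<in> {l. l < length xs \<and> xs ! l < t}" "i \<noteq> j" using i by auto
  thus ?thesis by auto
qed


locale spec =
  fixes A V :: "real mat" and es :: "real list" and n :: nat
  assumes A: "A \<in> carrier_mat n n" and V: "V \<in> carrier_mat n n" and len: "length es = n"
    and VV: "V\<^sup>T * V = 1\<^sub>m n" and AV: "A * V = V * mat_diag n (\<lambda>i. es ! i)"
begin

lemma VVT: "V * V\<^sup>T = 1\<^sub>m n" using mat_mult_left_right_inverse[of "V\<^sup>T" n V] V VV by auto

lemma F1: assumes c: "c \<in> carrier_vec n" shows "(V *\<^sub>v c) \<bullet> (V *\<^sub>v c) = c \<bullet> c"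
proof -
  have "(V\<^sup>T *\<^sub>v (V *\<^sub>v c)) \<bullet> c = (V *\<^sub>v c) \<bullet> (V *\<^sub>v c)"
    by (rule transpose_vec_mult_scalar[OF V c]) (use V c in auto)
  moreover have "V\<^sup>T *\<^sub>v (V *\<^sub>v c) = c" using V c VV
    by (metis assoc_mult_mat_vec one_mult_mat_vec transpose_carrier_mat)
  ultimately show ?thesis by simp
qed

lemma Dv: assumes c: "c \<in> carrier_vec n" shows "mat_diag n (\<lambda>i. es ! i) *\<^sub>v c = vec n (\<lambda>l. es ! l * c $ l)"
proof (rule eq_vecI)
  fix i assume "i < dim_vec (vec n (\<lambda>l. es ! l * c $ l))"
  hence i: "i < n" by simp
  have "(mat_diag n (\<lambda>i. es ! i) *\<^sub>v c) $ i = (\<Sum>j\<in>{0..<n}. (if i = j then es ! j else 0) * c $ j)"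
    using i c by (simp add: mat_diag_def scalar_prod_def row_def)
  also have "\<dots> = (\<Sum>j\<in>{0..<n}. if i = j then es ! j * c $ j else 0)" by (rule sum.cong) auto
  also have "\<dots> = es ! i * c $ i" using i by simp
  finally show "(mat_diag n (\<lambda>i. es ! i) *\<^sub>v c) $ i = vec n (\<lambda>l. es ! l * c $ l) $ i" using i by simp
qed (simp add: mat_diag_def)

lemma F2: assumes c: "c \<in> carrier_vec n"
  shows "(V *\<^sub>v c) \<bullet> (A *\<^sub>v (V *\<^sub>v c)) = (\<Sum>l=0..<n. es ! l * (c $ l)^2)"
proof -
  let ?D = "mat_diag n (\<lambda>i. es ! i)"
  have Dc: "?D *\<^sub>v c \<in> carrier_vec n" by (rule mult_mat_vec_carrier[OF mat_diag_dim c])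
  have "A *\<^sub>v (V *\<^sub>v c) = V *\<^sub>v (?D *\<^sub>v c)"
    by (metis AV A V c assoc_mult_mat_vec mat_diag_dim)
  hence "(V *\<^sub>v c) \<bullet> (A *\<^sub>v (V *\<^sub>v c)) = (V\<^sup>T *\<^sub>v (V *\<^sub>v c)) \<bullet> (?D *\<^sub>v c)"
    using transpose_vec_mult_scalar[OF V Dc, of "V *\<^sub>v c"] V c by simp
  also have "V\<^sup>T *\<^sub>v (V *\<^sub>v c) = c" using V c VV
    by (metis assoc_mult_mat_vec one_mult_mat_vec transpose_carrier_mat)
  also have "c \<bullet> (?D *\<^sub>v c) = (\<Sum>l=0..<n. es ! l * (c $ l)^2)"
    unfolding Dv[OF c] using c by (simp add: scalar_prod_def power2_eq_square mult_ac)
  finally show ?thesis .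
qed

lemma F3: assumes z: "z \<in> carrier_vec n" shows "V *\<^sub>v (V\<^sup>T *\<^sub>v z) = z"
  using V z VVT by (metis assoc_mult_mat_vec one_mult_mat_vec transpose_carrier_mat)

lemma F4: assumes z: "z \<in> carrier_vec n" "l < n" shows "(V\<^sup>T *\<^sub>v z) $ l = col V l \<bullet> z"
  using assms V by simp

end



lemma sum_two: "i < (n::nat) \<Longrightarrow> j < n \<Longrightarrow> (\<Sum>l=0..<n. (if l = i then p else 0) + (if l = j then q else 0)) = (p + q :: real)"
proof -
  assume "i < n" "j < n"
  have "(\<Sum>l=0..<n. (if l = i then p else 0)) = p" using \<open>i < n\<close> sum.delta[of "{0..<n}" i "\<lambda>_. p"] by simp
  moreover have "(\<Sum>l=0..<n. (if l = j then q else 0)) = q" using \<open>j < n\<close> sum.delta[of "{0..<n}" j "\<lambda>_. q"] by simp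
  ultimately show ?thesis by (simp add: sum.distrib)
qed

context spec begin

lemma minmax_lower:
  assumes u: "u \<in> carrier_vec n"
    and H: "\<And>z. z \<in> carrier_vec n \<Longrightarrow> z \<noteq> 0\<^sub>v n \<Longrightarrow> u \<bullet> z = 0 \<Longrightarrow> t * (z \<bullet> z) \<le> z \<bullet> (A *\<^sub>v z)"
    and n2: "n \<ge> 2"
  shows "t \<le> sort es ! 1"
proof (rule ccontr)
  assume "\<not> t \<le> sort es ! 1"
  then obtain i j where ij: "i < n" "j < n" "i \<noteq> j" "es ! i < t" "es ! j < t"
    using sort_idx1_lt[of es t] len n2 by auto
  define si where "si = col V i \<bullet> u"
  define sj where "sj = col V j \<bullet> u"
  define \<alpha> where "\<alpha> = (if si = 0 \<and> sj = 0 then 1 else sj)"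
  define \<beta> where "\<beta> = (if si = 0 \<and> sj = 0 then 0 else - si)"
  have ab: "si * \<alpha> + sj * \<beta> = 0" unfolding \<alpha>_def \<beta>_def by auto
  have abpos: "\<alpha>^2 + \<beta>^2 > 0" unfolding \<alpha>_def \<beta>_def by (auto simp: sum_power2_gt_zero_iff)
  define c where "c = vec n (\<lambda>l. (if l = i then \<alpha> else 0) + (if l = j then \<beta> else 0))"
  have c: "c \<in> carrier_vec n" unfolding c_def by simp
  define z where "z = V *\<^sub>v c"
  have z: "z \<in> carrier_vec n" unfolding z_def using V c by simp
  have cc: "c \<bullet> c = \<alpha>^2 + \<beta>^2"
  proof -
    have "c \<bullet> c = (\<Sum>l=0..<n. (if l = i then \<alpha>^2 else 0) + (if l = j then \<beta>^2 else 0))"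
      unfolding c_def scalar_prod_def using ij(3) by (intro sum.cong) (auto simp: power2_eq_square)
    thus ?thesis using sum_two ij by simp
  qed
  have zz: "z \<bullet> z = \<alpha>^2 + \<beta>^2" unfolding z_def F1[OF c] cc ..
  have z0: "z \<noteq> 0\<^sub>v n" using zz abpos by auto
  have uz: "u \<bullet> z = 0"
  proof -
    have "u \<bullet> z = (V\<^sup>T *\<^sub>v u) \<bullet> c" unfolding z_def by (rule transpose_vec_mult_scalar[OF V c u, symmetric])
    also have "\<dots> = (\<Sum>l=0..<n. (if l = i then si * \<alpha> else 0) + (if l = j then sj * \<beta> else 0))"
      unfolding scalar_prod_def using c u V ij(3) by (intro sum.cong) (auto simp: c_def si_def sj_def)
    also have "\<dots> = 0" using sum_two ij ab by simp
    finally show ?thesis .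
  qed
  have Q: "z \<bullet> (A *\<^sub>v z) = es ! i * \<alpha>^2 + es ! j * \<beta>^2"
  proof -
    have "z \<bullet> (A *\<^sub>v z) = (\<Sum>l=0..<n. es ! l * (c $ l)^2)" unfolding z_def by (rule F2[OF c])
    also have "\<dots> = (\<Sum>l=0..<n. (if l = i then es ! i * \<alpha>^2 else 0) + (if l = j then es ! j * \<beta>^2 else 0))"
      unfolding c_def using ij(3) by (intro sum.cong) (auto simp: power2_eq_square)
    finally show ?thesis using sum_two ij by simp
  qed
  have "es ! i * \<alpha>^2 + es ! j * \<beta>^2 < t * (\<alpha>^2 + \<beta>^2)"
  proof -
    have "es ! i * \<alpha>^2 \<le> t * \<alpha>^2" using ij by (simp add: mult_right_mono)
    moreover have "es ! j * \<beta>^2 \<le> t * \<beta>^2" using ij by (simp add: mult_right_mono)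
    moreover have "\<alpha> \<noteq> 0 \<or> \<beta> \<noteq> 0" using abpos by auto
    hence "es ! i * \<alpha>^2 < t * \<alpha>^2 \<or> es ! j * \<beta>^2 < t * \<beta>^2" using ij by auto
    ultimately show ?thesis by (simp add: distrib_left) linarith
  qed
  thus False using H[OF z z0 uz] Q zz by simp
qed

lemma minmax_upper:
  assumes x1: "x1 \<in> carrier_vec n" and x2: "x2 \<in> carrier_vec n"
    and H: "\<And>a b. a \<noteq> 0 \<or> b \<noteq> 0 \<Longrightarrow> a \<cdot>\<^sub>v x1 + b \<cdot>\<^sub>v x2 \<noteq> 0\<^sub>v n \<and>
       (a \<cdot>\<^sub>v x1 + b \<cdot>\<^sub>v x2) \<bullet> (A *\<^sub>v (a \<cdot>\<^sub>v x1 + b \<cdot>\<^sub>v x2)) \<le> t * ((a \<cdot>\<^sub>v x1 + b \<cdot>\<^sub>v x2) \<bullet> (a \<cdot>\<^sub>v x1 + b \<cdot>\<^sub>v x2))"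
    and n2: "n \<ge> 2"
  shows "sort es ! 1 \<le> t"
proof (rule ccontr)
  assume nt: "\<not> sort es ! 1 \<le> t"
  have "\<exists>l0<n. \<forall>l<n. l \<noteq> l0 \<longrightarrow> es ! l > t"
  proof (rule ccontr)
    assume "\<not> ?thesis"
    hence H2: "\<And>l0. l0 < n \<Longrightarrow> \<exists>l<n. l \<noteq> l0 \<and> es ! l \<le> t" by force
    obtain i where i: "i < n" "i \<noteq> 0" "es ! i \<le> t" using H2[of 0] n2 by auto
    obtain j where j: "j < n" "j \<noteq> i" "es ! j \<le> t" using H2[OF i(1)] by auto
    show False using sort_idx1_le[of i es j t] i j len nt by auto
  qed
  then obtain l0 where l0: "l0 < n" "\<And>l. l < n \<Longrightarrow> l \<noteq> l0 \<Longrightarrow> es ! l > t" by auto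
  define w where "w = col V l0"
  have w: "w \<in> carrier_vec n" unfolding w_def using V l0 by simp
  define a where "a = (if w \<bullet> x1 = 0 \<and> w \<bullet> x2 = 0 then 1 else w \<bullet> x2)"
  define b where "b = (if w \<bullet> x1 = 0 \<and> w \<bullet> x2 = 0 then 0 else - (w \<bullet> x1))"
  have ab0: "a \<noteq> 0 \<or> b \<noteq> 0" unfolding a_def b_def by auto
  define z where "z = a \<cdot>\<^sub>v x1 + b \<cdot>\<^sub>v x2"
  have z: "z \<in> carrier_vec n" unfolding z_def using x1 x2 by simp
  have wz: "w \<bullet> z = 0"
  proof -
    have "w \<bullet> z = a * (w \<bullet> x1) + b * (w \<bullet> x2)" unfolding z_def
      using w x1 x2 by (simp add: scalar_prod_add_distrib[of _ n])
    thus ?thesis unfolding a_def b_def by (auto simp: mult.commute)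
  qed
  have Hz: "z \<noteq> 0\<^sub>v n" "z \<bullet> (A *\<^sub>v z) \<le> t * (z \<bullet> z)" using H[OF ab0] unfolding z_def by auto
  define c where "c = V\<^sup>T *\<^sub>v z"
  have c: "c \<in> carrier_vec n" unfolding c_def using V z by simp
  have zc: "z = V *\<^sub>v c" unfolding c_def using F3[OF z] by simp
  have cl0: "c $ l0 = 0" unfolding c_def using F4[OF z l0(1)] wz w_def by simp
  have "c \<noteq> 0\<^sub>v n" using Hz(1) zc V by auto
  then obtain l where l: "l < n" "c $ l \<noteq> 0" using c by (metis eq_vecI carrier_vecD index_zero_vec(1) index_zero_vec(2))
  have ll0: "l \<noteq> l0" using l cl0 by auto
  have "0 < (\<Sum>l=0..<n. (es ! l - t) * (c $ l)^2)"
  proof (rule sum_pos2[of _ l])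
    show "0 < (es ! l - t) * (c $ l)^2" using l0(2)[OF l(1) ll0] l by simp
    fix l' assume "l' \<in> {0..<n}"
    thus "0 \<le> (es ! l' - t) * (c $ l')^2" using l0 cl0 by (cases "l' = l0") (simp_all add: less_imp_le)
  qed (use l in auto)
  also have "(\<Sum>l=0..<n. (es ! l - t) * (c $ l)^2) = z \<bullet> (A *\<^sub>v z) - t * (z \<bullet> z)"
    unfolding zc F2[OF c] F1[OF c] using c
    by (simp add: scalar_prod_def left_diff_distrib sum_subtractf sum_distrib_left power2_eq_square)
  finally show False using Hz(2) by simp
qed

end



definition ed :: "nat \<Rightarrow> nat \<Rightarrow> nat \<Rightarrow> nat \<Rightarrow> bool" where
  "ed k d i j = octo_edge_lt k d (Suc i) (Suc j)"

definition ei :: "nat \<Rightarrow> nat \<Rightarrow> nat \<Rightarrow> nat \<Rightarrow> real" where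
  "ei k d i j = (if ed k d i j then 1 else 0)"

lemma lap_carrier: "octo_laplacian k d \<in> carrier_mat k k"
  by (simp add: octo_laplacian_def)

lemma adj_sym: "octo_adj k d i j = octo_adj k d j i"
  unfolding octo_adj_def by auto

lemma adj_irrefl: "\<not> octo_adj k d i i"
  unfolding octo_adj_def octo_edge_lt_def by auto

lemma lap_sym: "i < k \<Longrightarrow> j < k \<Longrightarrow> octo_laplacian k d $$ (i,j) = octo_laplacian k d $$ (j,i)"
  unfolding octo_laplacian_def using adj_sym by auto

lemma adj_ei: "(if octo_adj k d (Suc i) (Suc j) then 1 else 0) = ei k d i j + ei k d j i"
  unfolding ei_def ed_def octo_adj_def octo_edge_lt_def by auto

lemma deg_sum: "real (octo_degree k d (Suc i)) = (\<Sum>j=0..<k. if octo_adj k d (Suc i) (Suc j) then 1 else 0)"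
proof -
  have "{j \<in> {1..k}. octo_adj k d (Suc i) j} = Suc ` {j \<in> {0..<k}. octo_adj k d (Suc i) (Suc j)}"
  proof (rule Set.set_eqI)
    fix j show "j \<in> {j \<in> {1..k}. octo_adj k d (Suc i) j} \<longleftrightarrow> j \<in> Suc ` {j \<in> {0..<k}. octo_adj k d (Suc i) (Suc j)}"
      by (cases j) (auto simp: image_iff)
  qed
  hence "octo_degree k d (Suc i) = card {j \<in> {0..<k}. octo_adj k d (Suc i) (Suc j)}"
    unfolding octo_degree_def by (simp add: card_image)
  hence "real (octo_degree k d (Suc i)) = (\<Sum>j\<in>{j \<in> {0..<k}. octo_adj k d (Suc i) (Suc j)}. 1)" by simp
  also have "\<dots> = (\<Sum>j=0..<k. if octo_adj k d (Suc i) (Suc j) then 1 else 0)"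
    by (rule sum.inter_filter) simp
  finally show ?thesis .
qed

lemma lap_vec:
  assumes x: "x \<in> carrier_vec k" and i: "i < k"
  shows "(octo_laplacian k d *\<^sub>v x) $ i = (\<Sum>j=0..<k. (ei k d i j + ei k d j i) * (x $ i - x $ j))"
proof -
  let ?a = "\<lambda>j. ei k d i j + ei k d j i"
  have "(octo_laplacian k d *\<^sub>v x) $ i = (\<Sum>j=0..<k. octo_laplacian k d $$ (i,j) * x $ j)"
    using x i lap_carrier[of k d] by (simp add: scalar_prod_def row_def)
  also have "\<dots> = (\<Sum>j=0..<k. (if i = j then (\<Sum>l=0..<k. ?a l) * x $ j else 0) - ?a j * x $ j)"
  proof (rule sum.cong[OF refl])
    fix j assume j: "j \<in> {0..<k}"
    have aj: "?a j = (if octo_adj k d (Suc i) (Suc j) then 1 else 0)" by (simp add: adj_ei)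
    show "octo_laplacian k d $$ (i,j) * x $ j = (if i = j then (\<Sum>l=0..<k. ?a l) * x $ j else 0) - ?a j * x $ j"
    proof (cases "i = j")
      case True
      have "?a j = 0" using aj adj_irrefl[of k d "Suc i"] True by simp
      moreover have "octo_laplacian k d $$ (i,j) = (\<Sum>l=0..<k. ?a l)"
        using i True unfolding octo_laplacian_def by (simp add: deg_sum adj_ei)
      ultimately show ?thesis using True by simp
    next
      case False
      have e: "octo_laplacian k d $$ (i,j) = - ?a j"
        using i j False aj unfolding octo_laplacian_def by auto
      show ?thesis using False unfolding e by (simp add: algebra_simps)
    qed
  qed
  also have "\<dots> = (\<Sum>l=0..<k. ?a l) * x $ i - (\<Sum>j=0..<k. ?a j * x $ j)"
    using i by (simp add: sum_subtractf)
  also have "\<dots> = (\<Sum>j=0..<k. ?a j * (x $ i - x $ j))"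
  proof -
    have "(\<Sum>j=0..<k. ?a j * (x $ i - x $ j)) = (\<Sum>j=0..<k. ?a j * x $ i) - (\<Sum>j=0..<k. ?a j * x $ j)"
      by (simp only: right_diff_distrib sum_subtractf)
    moreover have "(\<Sum>j=0..<k. ?a j * x $ i) = (\<Sum>l=0..<k. ?a l) * x $ i" by (rule sum_distrib_right[symmetric])
    ultimately show ?thesis by simp
  qed
  finally show ?thesis .
qed

lemma lap_quad:
  assumes x: "x \<in> carrier_vec k"
  shows "x \<bullet> (octo_laplacian k d *\<^sub>v x) = (\<Sum>i=0..<k. \<Sum>j=0..<k. ei k d i j * (x $ i - x $ j)^2)"
proof -
  have "x \<bullet> (octo_laplacian k d *\<^sub>v x) = (\<Sum>i=0..<k. x $ i * (\<Sum>j=0..<k. (ei k d i j + ei k d j i) * (x $ i - x $ j)))"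
    unfolding scalar_prod_def using x lap_carrier[of k d] lap_vec[OF x, of _ d] by (simp del: index_mult_mat_vec)
  also have "\<dots> = (\<Sum>i=0..<k. \<Sum>j=0..<k. ei k d i j * (x $ i * (x $ i - x $ j)) + ei k d j i * (x $ i * (x $ i - x $ j)))"
    by (intro sum.cong refl) (simp add: sum_distrib_left algebra_simps)
  also have "\<dots> = (\<Sum>i=0..<k. \<Sum>j=0..<k. ei k d i j * (x $ i * (x $ i - x $ j))) + (\<Sum>i=0..<k. \<Sum>j=0..<k. ei k d j i * (x $ i * (x $ i - x $ j)))"
    by (simp add: sum.distrib)
  also have "(\<Sum>i=0..<k. \<Sum>j=0..<k. ei k d j i * (x $ i * (x $ i - x $ j))) = (\<Sum>i=0..<k. \<Sum>j=0..<k. ei k d i j * (x $ j * (x $ j - x $ i)))"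
    by (rule sum.swap)
  also have "(\<Sum>i=0..<k. \<Sum>j=0..<k. ei k d i j * (x $ i * (x $ i - x $ j))) + \<dots> = (\<Sum>i=0..<k. \<Sum>j=0..<k. ei k d i j * (x $ i - x $ j)^2)"
    by (simp add: sum.distrib[symmetric] power2_eq_square algebra_simps)
  finally show ?thesis .
qed


lemma ed_iff: "ed (Suc k') d i j \<longleftrightarrow> (j = k' \<and> i < k' \<and> Suc i mod d = 1 mod d) \<or> (j = Suc i \<and> Suc i < k' \<and> Suc i mod d \<noteq> 0)"
  unfolding ed_def octo_edge_lt_def by auto

lemma edge_sum:
  "(\<Sum>i=0..<Suc k'. \<Sum>j=0..<Suc k'. ei (Suc k') d i j * f i j) =
   (\<Sum>i=0..<k'. (if Suc i mod d = 1 mod d then f i k' else 0) + (if Suc i < k' \<and> Suc i mod d \<noteq> 0 then f i (Suc i) else 0))"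
proof -
  define R where "R i = (if i < k' \<and> Suc i mod d = 1 mod d then f i k' else 0) + (if Suc i < k' \<and> Suc i mod d \<noteq> 0 then f i (Suc i) else 0)" for i
  have row: "(\<Sum>j=0..<Suc k'. ei (Suc k') d i j * f i j) = R i" for i
  proof -
    have "(\<Sum>j=0..<Suc k'. ei (Suc k') d i j * f i j) =
      (\<Sum>j=0..<Suc k'. (if j = k' then (if i < k' \<and> Suc i mod d = 1 mod d then f i k' else 0) else 0) +
                       (if j = Suc i then (if Suc i < k' \<and> Suc i mod d \<noteq> 0 then f i (Suc i) else 0) else 0))"
      by (intro sum.cong refl) (auto simp: ei_def ed_iff)
    also have "\<dots> = R i" unfolding R_def by (simp add: sum.distrib)
    finally show ?thesis .
  qed
  have "(\<Sum>i=0..<Suc k'. \<Sum>j=0..<Suc k'. ei (Suc k') d i j * f i j) = (\<Sum>i=0..<Suc k'. R i)"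
    using row by simp
  also have "\<dots> = (\<Sum>i=0..<k'. R i)" by (simp add: R_def)
  also have "\<dots> = (\<Sum>i=0..<k'. (if Suc i mod d = 1 mod d then f i k' else 0) + (if Suc i < k' \<and> Suc i mod d \<noteq> 0 then f i (Suc i) else 0))"
    by (intro sum.cong refl) (simp add: R_def)
  finally show ?thesis .
qed


definition G :: "nat \<Rightarrow> nat \<Rightarrow> (nat \<Rightarrow> real) \<Rightarrow> nat \<Rightarrow> real" where
  "G k' d x i = (if Suc i mod d = 1 mod d then (x i - x k')^2 else 0) +
                (if Suc i < k' \<and> Suc i mod d \<noteq> 0 then (x i - x (Suc i))^2 else 0)"

lemma cauchy_sum: "(\<Sum>q=0..<N. h q)^2 \<le> real N * (\<Sum>q=0..<N. (h q)^2)"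
proof -
  have "0 \<le> (\<Sum>i=0..<N. \<Sum>j=0..<N. (h i - h j)^2)" by (intro sum_nonneg) auto
  also have "(\<Sum>i=0..<N. \<Sum>j=0..<N. (h i - h j)^2) = 2 * (real N * (\<Sum>q=0..<N. (h q)^2)) - 2 * (\<Sum>q=0..<N. h q)^2"
    by (simp add: power2_diff sum.distrib sum_subtractf sum_distrib_left sum_distrib_right power2_eq_square algebra_simps)
  finally show ?thesis by simp
qed

lemma mean_min:
  fixes x :: "nat \<Rightarrow> real"
  assumes "(\<Sum>i=0..<N. x i) = 0"
  shows "(\<Sum>i=0..<N. (x i)^2) \<le> (\<Sum>i=0..<N. (x i - c)^2)"
proof -
  have "(\<Sum>i=0..<N. (x i - c)^2) = (\<Sum>i=0..<N. (x i)^2) - 2 * c * (\<Sum>i=0..<N. x i) + real N * c^2"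
    by (simp add: power2_diff sum.distrib sum_subtractf sum_distrib_left mult_ac)
  thus ?thesis using assms by simp
qed

lemma sum_group: "(\<Sum>i=0..<m * d. g i) = (\<Sum>a=0..<m. \<Sum>p=0..<d. g (a * d + p :: nat))"
proof (induction m)
  case 0 then show ?case by simp
next
  case (Suc m)
  have "{0..<Suc m * d} = {0..<m * d} \<union> {m * d..<m * d + d}" by auto
  hence "(\<Sum>i=0..<Suc m * d. g i) = (\<Sum>i=0..<m * d. g i) + (\<Sum>i=m * d..<m * d + d. g i)"
    by (simp add: sum.union_disjoint)
  also have "(\<Sum>i=m * d..<m * d + d. g i) = (\<Sum>p=0..<d. g (m * d + p))"
    using sum.shift_bounds_nat_ivl[of g 0 "m*d" d] by (simp add: add.commute)
  finally show ?case using Suc by simp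
qed

lemma mod_facts:
  assumes p: "p < (d::nat)"
  shows "Suc (a * d + p) mod d = 1 mod d \<longleftrightarrow> p = 0"
    and "Suc (a * d + p) mod d = 0 \<longleftrightarrow> Suc p = d"
proof -
  have e: "Suc (a * d + p) mod d = Suc p mod d" by (simp add: mod_add_left_eq[symmetric] add.commute[of "a*d"]) 
  show "Suc (a * d + p) mod d = 1 mod d \<longleftrightarrow> p = 0"
  proof (cases "Suc p < d")
    case True
    then show ?thesis unfolding e using p by (cases d) auto
  next
    case False
    hence "Suc p = d" using p by simp
    then show ?thesis unfolding e using p by (cases "d = 1") auto
  qed
  show "Suc (a * d + p) mod d = 0 \<longleftrightarrow> Suc p = d"
  proof (cases "Suc p < d")
    case True
    then show ?thesis unfolding e by simp
  next
    case False
    hence "Suc p = d" using p by simp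
    then show ?thesis unfolding e by simp
  qed
qed


lemma arm:
  fixes x :: "nat \<Rightarrow> real"
  assumes a: "a < m" and km: "k' = m * d" and d: "d \<ge> 1"
  shows "(\<Sum>p=0..<d. (x (a*d+p) - x k')^2) \<le> real d ^ 2 * (\<Sum>p=0..<d. G k' d x (a*d+p))"
proof -
  define h where "h q = (if q = 0 then x (a*d) - x k' else x (a*d+q) - x (a*d+q-1))" for q
  have tel: "x (a*d+p) - x k' = (\<Sum>q=0..<Suc p. h q)" for p
    by (induction p) (simp_all add: h_def)
  have Gp: "G k' d x (a*d+p) = (if p = 0 then (h 0)^2 else 0) + (if Suc p < d then (h (Suc p))^2 else 0)" if p: "p < d" for p
  proof -
    have ad: "a*d + d \<le> m*d" using a by (metis Suc_leI mult_Suc mult_le_mono1 add.commute)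
    have c2: "(Suc (a*d+p) < k' \<and> Suc (a*d+p) mod d \<noteq> 0) \<longleftrightarrow> Suc p < d"
      using mod_facts(2)[OF p, of a] p ad km by auto
    show ?thesis unfolding G_def using mod_facts(1)[OF p, of a] c2 by (auto simp: h_def power2_commute)
  qed
  obtain d' where d': "d = Suc d'" using d by (cases d) auto
  have sumG: "(\<Sum>p=0..<d. G k' d x (a*d+p)) = (\<Sum>q=0..<d. (h q)^2)"
  proof -
    have "(\<Sum>p=0..<d. G k' d x (a*d+p)) = (\<Sum>p=0..<d. (if p = 0 then (h 0)^2 else 0) + (if Suc p < d then (h (Suc p))^2 else 0))"
      using Gp by (intro sum.cong) auto
    also have "\<dots> = (\<Sum>p=0..<d. (if p = 0 then (h 0)^2 else 0)) + (\<Sum>p=0..<d. if Suc p < d then (h (Suc p))^2 else 0)"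
      by (simp add: sum.distrib)
    also have "(\<Sum>p=0..<d. (if p = 0 then (h 0)^2 else 0)) = (h 0)^2"
      using d sum.delta[of "{0..<d}" 0 "\<lambda>_. (h 0)^2"] by simp
    also have "(\<Sum>p=0..<d. if Suc p < d then (h (Suc p))^2 else 0) = (\<Sum>p=0..<d'. (h (Suc p))^2)"
      unfolding d' by simp
    also have "(h 0)^2 + (\<Sum>p=0..<d'. (h (Suc p))^2) = (\<Sum>q=0..<d. (h q)^2)" unfolding d' sum_Suc_split ..
    finally show ?thesis .
  qed
  have "(\<Sum>p=0..<d. (x (a*d+p) - x k')^2) = (\<Sum>p=0..<d. (\<Sum>q=0..<Suc p. h q)^2)" using tel by simp
  also have "\<dots> \<le> (\<Sum>p=0..<d. real (Suc p) * (\<Sum>q=0..<Suc p. (h q)^2))"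
    by (intro sum_mono cauchy_sum)
  also have "\<dots> \<le> (\<Sum>p=0..<d. real d * (\<Sum>q=0..<d. (h q)^2))"
  proof (intro sum_mono mult_mono)
    fix p assume "p \<in> {0..<d}"
    thus "real (Suc p) \<le> real d" by simp
    show "(\<Sum>q=0..<Suc p. (h q)^2) \<le> (\<Sum>q=0..<d. (h q)^2)"
      using \<open>p \<in> {0..<d}\<close> by (intro sum_mono2) auto
  next
    fix p show "0 \<le> (\<Sum>q=0..<Suc p. (h q)^2)" by (intro sum_nonneg) auto
  qed auto
  also have "\<dots> = real d ^ 2 * (\<Sum>q=0..<d. (h q)^2)" by (simp add: power2_eq_square)
  finally show ?thesis unfolding sumG .
qed

lemma poincare:
  fixes x :: "nat \<Rightarrow> real"
  assumes d: "d \<ge> 1" and km: "k' = m * d" and s0: "(\<Sum>i=0..<Suc k'. x i) = 0"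
  shows "(\<Sum>i=0..<Suc k'. (x i)^2) \<le> real d ^ 2 * (\<Sum>i=0..<k'. G k' d x i)"
proof -
  have "(\<Sum>i=0..<Suc k'. (x i)^2) \<le> (\<Sum>i=0..<Suc k'. (x i - x k')^2)" by (rule mean_min[OF s0])
  also have "\<dots> = (\<Sum>i=0..<k'. (x i - x k')^2)" by simp
  also have "\<dots> = (\<Sum>a=0..<m. \<Sum>p=0..<d. (x (a*d+p) - x k')^2)" unfolding km by (rule sum_group)
  also have "\<dots> \<le> (\<Sum>a=0..<m. real d ^ 2 * (\<Sum>p=0..<d. G k' d x (a*d+p)))"
    by (intro sum_mono arm) (use km d in auto)
  also have "\<dots> = real d ^ 2 * (\<Sum>a=0..<m. \<Sum>p=0..<d. G k' d x (a*d+p))" by (simp add: sum_distrib_left)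
  also have "(\<Sum>a=0..<m. \<Sum>p=0..<d. G k' d x (a*d+p)) = (\<Sum>i=0..<k'. G k' d x i)" unfolding km by (rule sum_group[symmetric])
  finally show ?thesis .
qed


lemma gauss1: "(\<Sum>i=0..<d. real (Suc i)) = real d * (real d + 1) / 2"
  by (induction d) (simp_all add: field_simps)

lemma gauss2: "(\<Sum>i=0..<d. (real (Suc i))^2) = real d * (real d + 1) * (2 * real d + 1) / 6"
  by (induction d) (simp_all add: field_simps power2_eq_square)

lemma G_test:
  assumes km: "k' = m * d" and d: "d \<ge> 1" and m: "m \<ge> 1" and i: "i < k'"
  shows "G k' d (\<lambda>i. if i < d then real (Suc i) else 0) i = (if i = 0 then 1 else 0) + (if Suc i < d then 1 else 0)"
proof -
  have dk: "d \<le> k'" using km m by simp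
  show ?thesis
  proof (cases "i < d")
    case True
    have f1: "Suc i mod d = 1 mod d \<longleftrightarrow> i = 0" using mod_facts(1)[OF True, of 0] by simp
    have f2: "Suc i mod d = 0 \<longleftrightarrow> Suc i = d" using mod_facts(2)[OF True, of 0] by simp
    have f3: "Suc i < d \<Longrightarrow> Suc i < k'" using dk by simp
    show ?thesis unfolding G_def using True f1 f2 f3 dk by (auto simp: power2_eq_square)
  next
    case False
    hence "i \<noteq> 0" using d by auto
    then show ?thesis unfolding G_def using dk False by auto
  qed
qed

lemma G_sum_test:
  assumes km: "k' = m * d" and d: "d \<ge> 1" and m: "m \<ge> 1"
  shows "(\<Sum>i=0..<k'. G k' d (\<lambda>i. if i < d then real (Suc i) else 0) i) = real d"
proof -
  have dk: "d \<le> k'" using km m by simp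
  have "(\<Sum>i=0..<k'. G k' d (\<lambda>i. if i < d then real (Suc i) else 0) i) =
        (\<Sum>i=0..<k'. (if i = 0 then 1 else 0) + (if Suc i < d then 1 else 0))"
    using G_test[OF km d m] by (intro sum.cong) auto
  also have "\<dots> = (\<Sum>i=0..<k'. (if i = 0 then 1 else 0)) + (\<Sum>i=0..<k'. (if Suc i < d then 1 else 0))"
    by (simp add: sum.distrib)
  also have "(\<Sum>i=0..<k'. (if i = 0 then 1 else 0)) = (1::real)"
    using dk d sum.delta[of "{0..<k'}" 0 "\<lambda>_. 1::real"] by simp
  also have "(\<Sum>i=0..<k'. (if Suc i < d then 1 else 0)) = (\<Sum>i\<in>{0..<d-1}. 1::real)"
  proof -
    have "(\<Sum>i=0..<k'. (if Suc i < d then 1 else 0)) = (\<Sum>i\<in>{i\<in>{0..<k'}. Suc i < d}. 1::real)"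
      by (rule sum.inter_filter[symmetric]) simp
    also have "{i\<in>{0..<k'}. Suc i < d} = {0..<d-1}" using dk by auto
    finally show ?thesis .
  qed
  also have "1 + (\<Sum>i\<in>{0..<d-1}. 1::real) = real d" using d by simp
  finally show ?thesis .
qed


lemma sum_trunc: "d \<le> (k::nat) \<Longrightarrow> (\<Sum>i=0..<k. if i < d then f i else (0::real)) = (\<Sum>i=0..<d. f i)"
proof -
  assume dk: "d \<le> k"
  have "(\<Sum>i=0..<k. if i < d then f i else (0::real)) = (\<Sum>i\<in>{i\<in>{0..<k}. i < d}. f i)"
    by (rule sum.inter_filter[symmetric]) simp
  also have "{i\<in>{0..<k}. i < d} = {0..<d}" using dk by auto
  finally show ?thesis .
qed

lemma test_norm:
  fixes d k :: nat
  assumes d: "d \<ge> 1" and dk: "d < k"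
  defines "y \<equiv> (\<lambda>i. if i < d then real (Suc i) else 0)"
  defines "\<mu> \<equiv> (\<Sum>i=0..<k. y i) / real k"
  shows "(\<Sum>i=0..<k. y i - \<mu>) = 0" and "real d ^ 3 \<le> 12 * (\<Sum>i=0..<k. (y i - \<mu>)^2)"
proof -
  define S1 where "S1 = (\<Sum>i=0..<k. y i)"
  define S2 where "S2 = (\<Sum>i=0..<k. (y i)^2)"
  have S1: "S1 = real d * (real d + 1) / 2" unfolding S1_def y_def using sum_trunc[of d k "\<lambda>i. real (Suc i)"] dk gauss1 by simp
  have S2: "S2 = real d * (real d + 1) * (2 * real d + 1) / 6"
  proof -
    have "S2 = (\<Sum>i=0..<k. if i < d then (real (Suc i))^2 else 0)" unfolding S2_def y_def by (intro sum.cong) auto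
    thus ?thesis using sum_trunc[of d k "\<lambda>i. (real (Suc i))^2"] dk gauss2 by simp
  qed
  have kpos: "real k > 0" using dk by simp
  show "(\<Sum>i=0..<k. y i - \<mu>) = 0" unfolding \<mu>_def using kpos by (simp add: sum_subtractf)
  have "(\<Sum>i=0..<k. (y i - \<mu>)^2) = S2 - 2 * \<mu> * S1 + real k * \<mu>^2"
    unfolding S1_def S2_def by (simp add: power2_diff sum.distrib sum_subtractf sum_distrib_left mult_ac)
  also have "\<dots> = S2 - S1^2 / real k" unfolding \<mu>_def S1_def[symmetric] using kpos by (simp add: field_simps power2_eq_square)
  finally have N: "(\<Sum>i=0..<k. (y i - \<mu>)^2) = S2 - S1^2 / real k" .
  have "S1^2 / real k \<le> S1^2 / (real d + 1)"
    using dk by (intro divide_left_mono) auto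
  also have "S1^2 / (real d + 1) = real d ^ 2 * (real d + 1) / 4" unfolding S1 by (simp add: field_simps power2_eq_square)
  finally have "12 * (S2 - S1^2 / real k) \<ge> 12 * S2 - 3 * real d ^ 2 * (real d + 1)" by simp
  moreover have "12 * S2 - 3 * real d ^ 2 * (real d + 1) = real d * (real d + 1) * (real d + 2)"
    unfolding S2 by (simp add: field_simps power2_eq_square)
  moreover have "real d ^ 3 \<le> real d * (real d + 1) * (real d + 2)"
    by (simp add: power3_eq_cube field_simps)
  ultimately show "real d ^ 3 \<le> 12 * (\<Sum>i=0..<k. (y i - \<mu>)^2)" unfolding N by linarith
qed


lemma proots_linear_list: "proots (\<Prod>a\<leftarrow>es. [:- a, 1:]) = mset (es :: real list)"
proof (induction es)
  case Nil then show ?case by simp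
next
  case (Cons a es)
  have "(\<Prod>a\<leftarrow>es. [:- a, 1:]) \<noteq> 0" by (auto simp: prod_list_zero_iff)
  have "proots (\<Prod>x\<leftarrow>a # es. [:- x, 1:]) = proots ([:- a, 1:] * (\<Prod>a\<leftarrow>es. [:- a, 1:]))" by simp
  also have "\<dots> = proots [:- a, 1:] + proots (\<Prod>a\<leftarrow>es. [:- a, 1:])"
    by (rule proots_mult) (use \<open>(\<Prod>a\<leftarrow>es. [:- a, 1:]) \<noteq> 0\<close> in auto)
  also have "proots [:- a, 1:] = {#a#}" using proots_linear_factor[of "- a"] by simp
  finally show ?case using Cons by simp
qed

context spec begin

lemma lambda2_eq: "lambda2 A = sort es ! 1"
proof -
  let ?D = "mat_diag n (\<lambda>i. es ! i)"
  have D: "?D \<in> carrier_mat n n" by simp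
  have "A = A * (V * V\<^sup>T)" using A VVT by simp
  also have "\<dots> = (A * V) * V\<^sup>T" using A V by (simp add: assoc_mult_mat[of _ n n _ n _ n])
  also have "\<dots> = V * ?D * V\<^sup>T" unfolding AV ..
  finally have AD: "A = V * ?D * V\<^sup>T" .
  have "similar_mat_wit A ?D V V\<^sup>T"
    by (rule similar_mat_witI[OF VVT VV AD A D V]) (use V in simp)
  hence "similar_mat A ?D" unfolding similar_mat_def by blast
  hence "char_poly A = char_poly ?D" by (rule char_poly_similar)
  also have "\<dots> = (\<Prod>a\<leftarrow>diag_mat ?D. [:- a, 1:])"
    by (rule char_poly_upper_triangular[OF D]) (simp add: upper_triangular_def mat_diag_def)
  also have "diag_mat ?D = es" unfolding diag_mat_def using len
    by (intro nth_equalityI) (auto simp: mat_diag_def)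
  finally have "char_poly A = (\<Prod>a\<leftarrow>es. [:- a, 1:])" .
  thus ?thesis unfolding lambda2_def sorted_eigenvalues_def by (simp add: proots_linear_list)
qed

end


lemma quad_G:
  assumes x: "x \<in> carrier_vec (Suc k')"
  shows "x \<bullet> (octo_laplacian (Suc k') d *\<^sub>v x) = (\<Sum>i=0..<k'. G k' d (\<lambda>i. x $ i) i)"
  unfolding lap_quad[OF x] edge_sum G_def by simp

lemma G_affine: "G k' d (\<lambda>i. a + b * f i) i = b^2 * G k' d f i"
  by (simp add: G_def power2_eq_square algebra_simps)

lemma sprod_self: "(x :: real vec) \<in> carrier_vec n \<Longrightarrow> x \<bullet> x = (\<Sum>i=0..<n. (x $ i)^2)"
  by (simp add: scalar_prod_def power2_eq_square)

lemma main_bounds: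
  fixes d k :: nat
  assumes d: "d \<ge> 1" and k2: "k \<ge> 2" and dv: "d dvd (k - 1)"
  shows "1 / real d ^ 2 \<le> lambda2 (octo_laplacian k d) \<and> lambda2 (octo_laplacian k d) \<le> 12 / real d ^ 2"
proof -
  obtain k' where kk: "k = Suc k'" using k2 by (cases k) auto
  have "d dvd k'" using dv kk by simp
  then obtain m where "k' = d * m" by (rule dvdE)
  hence km: "k' = m * d" by (simp add: mult.commute)
  have m: "m \<ge> 1" using km k2 kk by (cases m) auto
  have "1 * d \<le> m * d" using m by (rule mult_le_mono1)
  hence "d \<le> k'" using km by simp
  hence dk: "d < k" using kk by simp
  have dpos: "real d > 0" using d by simp
  let ?L = "octo_laplacian k d"
  obtain V es where V: "V \<in> carrier_mat k k" and les: "length es = k" and VV: "V\<^sup>T * V = 1\<^sub>m k"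
    and AV: "?L * V = V * mat_diag k (\<lambda>i. es ! i)"
    using real_spectral[OF lap_carrier lap_sym] by blast
  interpret spec ?L V es k using V les VV AV lap_carrier by unfold_locales auto
  have lam: "lambda2 ?L = sort es ! 1" by (rule lambda2_eq)
  define u :: "real vec" where "u = vec k (\<lambda>_. 1)"
  have u: "u \<in> carrier_vec k" unfolding u_def by simp
  have "1 / real d ^ 2 \<le> sort es ! 1"
  proof (rule minmax_lower[OF u])
    fix z assume z: "z \<in> carrier_vec k" and z0: "z \<noteq> 0\<^sub>v k" and uz: "u \<bullet> z = 0"
    have s0: "(\<Sum>i=0..<Suc k'. z $ i) = 0" using uz z kk unfolding u_def by (simp add: scalar_prod_def)
    have "(\<Sum>i=0..<Suc k'. (z $ i)^2) \<le> real d ^ 2 * (\<Sum>i=0..<k'. G k' d (\<lambda>i. z $ i) i)"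
      by (rule poincare[OF d km s0])
    hence "z \<bullet> z \<le> real d ^ 2 * (z \<bullet> (?L *\<^sub>v z))"
      using quad_G[of z k' d] sprod_self[OF z] z kk by simp
    thus "1 / real d ^ 2 * (z \<bullet> z) \<le> z \<bullet> (?L *\<^sub>v z)"
      using dpos by (simp add: field_simps)
  qed (use k2 in auto)
  hence low: "1 / real d ^ 2 \<le> lambda2 ?L" unfolding lam .
  define y where "y = (\<lambda>i. if i < d then real (Suc i) else 0)"
  define \<mu> where "\<mu> = (\<Sum>i=0..<k. y i) / real k"
  define y' where "y' = (\<lambda>i. y i - \<mu>)"
  define N where "N = (\<Sum>i=0..<k. (y' i)^2)"
  have sy': "(\<Sum>i=0..<k. y' i) = 0" unfolding y'_def \<mu>_def y_def using test_norm(1)[OF d dk] by simp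
  have Nb: "real d ^ 3 \<le> 12 * N" unfolding N_def y'_def \<mu>_def y_def using test_norm(2)[OF d dk] by simp
  have Npos: "N > 0" using Nb dpos by (smt (verit) zero_less_power)
  have Gy': "(\<Sum>i=0..<k'. G k' d y' i) = real d"
  proof -
    have "G k' d y' i = G k' d y i" for i
      using G_affine[of k' d "- \<mu>" 1 y i] unfolding y'_def by simp
    thus ?thesis using G_sum_test[OF km d m] unfolding y_def by simp
  qed
  define x1 :: "real vec" where "x1 = vec k (\<lambda>_. 1)"
  define x2 :: "real vec" where "x2 = vec k y'"
  have "sort es ! 1 \<le> 12 / real d ^ 2"
  proof (rule minmax_upper)
    show "x1 \<in> carrier_vec k" "x2 \<in> carrier_vec k" unfolding x1_def x2_def by auto
    show "2 \<le> k" by fact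
    fix a b :: real assume ab: "a \<noteq> 0 \<or> b \<noteq> 0"
    define z where "z = a \<cdot>\<^sub>v x1 + b \<cdot>\<^sub>v x2"
    have zv: "z = vec k (\<lambda>i. a + b * y' i)" unfolding z_def x1_def x2_def by auto
    have zc: "z \<in> carrier_vec k" unfolding zv by simp
    have zz: "z \<bullet> z = real k * a^2 + b^2 * N"
    proof -
      have "z \<bullet> z = (\<Sum>i=0..<k. (z $ i)^2)" by (rule sprod_self[OF zc])
      also have "\<dots> = (\<Sum>i=0..<k. (a + b * y' i)^2)" unfolding zv by simp
      also have "\<dots> = real k * a^2 + 2 * a * b * (\<Sum>i=0..<k. y' i) + b^2 * N"
        unfolding N_def by (simp add: power2_sum sum.distrib sum_distrib_left power_mult_distrib mult_ac)
      finally show ?thesis using sy' by simp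
    qed
    have Q: "z \<bullet> (?L *\<^sub>v z) = b^2 * real d"
    proof -
      have "z \<bullet> (?L *\<^sub>v z) = (\<Sum>i=0..<k'. G k' d (\<lambda>i. z $ i) i)" using quad_G[of z k' d] zc kk by simp
      also have "\<dots> = (\<Sum>i=0..<k'. G k' d (\<lambda>i. a + b * y' i) i)"
      proof (intro sum.cong refl)
        fix i assume i: "i \<in> {0..<k'}"
        have "G k' d (\<lambda>i. z $ i) i = G k' d (\<lambda>i. a + b * y' i) i"
          unfolding G_def zv using i kk by auto
        thus "G k' d (\<lambda>i. z $ i) i = G k' d (\<lambda>i. a + b * y' i) i" .
      qed
      also have "\<dots> = b^2 * (\<Sum>i=0..<k'. G k' d y' i)" by (simp add: G_affine sum_distrib_left)
      finally show ?thesis using Gy' by simp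
    qed
    have "real k * a^2 + b^2 * N > 0"
      using ab Npos dk by (auto intro: add_pos_nonneg add_nonneg_pos)
    hence "z \<noteq> 0\<^sub>v k" using zz by auto
    moreover have "b^2 * real d \<le> 12 / real d ^ 2 * (real k * a^2 + b^2 * N)"
    proof -
      have "real d * real d ^ 2 \<le> 12 * N" using Nb by (simp add: power3_eq_cube power2_eq_square mult_ac)
      hence "real d \<le> 12 / real d ^ 2 * N" using dpos by (simp add: field_simps)
      hence "b^2 * real d \<le> b^2 * (12 / real d ^ 2 * N)" by (rule mult_left_mono) simp
      also have "\<dots> \<le> 12 / real d ^ 2 * (real k * a^2 + b^2 * N)"
        using dpos by (simp add: field_simps)
      finally show ?thesis .
    qed
    ultimately show "a \<cdot>\<^sub>v x1 + b \<cdot>\<^sub>v x2 \<noteq> 0\<^sub>v k \<and>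
       (a \<cdot>\<^sub>v x1 + b \<cdot>\<^sub>v x2) \<bullet> (?L *\<^sub>v (a \<cdot>\<^sub>v x1 + b \<cdot>\<^sub>v x2)) \<le> 12 / real d ^ 2 * ((a \<cdot>\<^sub>v x1 + b \<cdot>\<^sub>v x2) \<bullet> (a \<cdot>\<^sub>v x1 + b \<cdot>\<^sub>v x2))"
      using Q zz unfolding z_def by simp
  qed
  hence "lambda2 ?L \<le> 12 / real d ^ 2" unfolding lam .
  thus ?thesis using low by simp
qed

theorem lemma5:
  shows "\<exists>c c' :: real. c > 0 \<and> c' > 0 \<and>
    (\<forall>d k :: nat. d \<ge> 1 \<longrightarrow> k \<ge> 2 \<longrightarrow> d dvd (k - 1) \<longrightarrow>
       c / real d ^ 2 \<le> lambda2 (octo_laplacian k d) \<and>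
       lambda2 (octo_laplacian k d) \<le> c' / real d ^ 2)"
  by (rule exI[of _ 1], rule exI[of _ 12]) (simp add: main_bounds)

end
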